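(* Under the standing assumptions below, let $\pi\in\Pi$, let $\delta>0$, and let $\tilde\pi$ be an optimal solution of the trust-region subproblem $$\max_{\pi'\in\Pi} L_{\pi}(\pi')\quad\text{s.t.}\quad \sum_{s}\rho_{\pi}(s)\,D_{TV}(\pi(\cdot|s)\,\|\,\pi'(\cdot|s))\le\delta.$$ Then $$L_{\pi}(\tilde\pi)-L_{\pi}(\pi)\ \ge\ \min\bigl(1,(1-\gamma)\delta\bigr)\,\mathbb A^*_{\pi}.$$
   Context: Consider an infinite-horizon discounted Markov decision process $(\mathcal S,\mathcal A,P,r,\rho_0,\gamma)$ with finite state space $\mathcal S$, finite action space $\mathcal A$, transition probabilities $P(s'|s,a)$, bounded reward function $r:\mathcal S\times\mathcal A\to\mathbb R$, initial-state distribution $\rho_0$ with $\rho_0(s)>0$ for all $s\in\mathcal S$, and discount factor $\gamma\in(0,1)$. A policy $\pi$ assigns to each state $s$ a probability distribution $\pi(\cdot|s)$ on $\mathcal A$; $\Pi$ denotes the set of all policies. The total expected reward is $\eta(\pi)=\mathbb E_\pi[\sum_{t=0}^\infty\gamma^t r(s_t,a_t)]$, where $s_0\sim\rho_0$, $a_t\sim\pi(\cdot|s_t)$, $s_{t+1}\sim P(\cdot|s_t,a_t)$. The unnormalized discounted visitation frequency is $\rho_\pi(s)=\sum_{t=0}^\infty\gamma^t\mathbb P(s_t=s\mid\pi)$. $Q_\pi(s,a)=\mathbb E_\pi[\sum_{l\ge0}\gamma^l r(s_l,a_l)\mid s_0=s,a_0=a]$, $V_\pi(s)=\mathbb E_\pi[\sum_{l\ge0}\gamma^l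 r(s_l,a_l)\mid s_0=s]$, and the advantage is $A_\pi(s,a)=Q_\pi(s,a)-V_\pi(s)$. The surrogate function is $L_\pi(\tilde\pi)=\eta(\pi)+\sum_s\rho_\pi(s)\sum_a\tilde\pi(a|s)A_\pi(s,a)$. The policy advantage of $\pi'$ with respect to $\pi$ is $\mathbb A_\pi(\pi')=\sum_s\rho_\pi(s)\sum_a\pi'(a|s)A_\pi(s,a)$, and $\mathbb A^*_\pi=\max_{\pi'\in\Pi}\mathbb A_\pi(\pi')$. The total variation distance is $D_{TV}(p\|q)=\frac12\sum_x|p(x)-q(x)|$. *)

theory Defs
  imports "HOL-Analysis.Analysis"
begin

(* Finite MDP: states 's::finite, actions 'a::finite.
   P s a s' = P(s'|s,a); r s a = reward; rho0 s = initial distribution; gamma discount.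
   A policy pol is a function with pol s a = pol(a|s). *)

definition is_dist :: "('x::finite \<Rightarrow> real) \<Rightarrow> bool" where
  "is_dist p \<longleftrightarrow> (\<forall>x. 0 \<le> p x) \<and> (\<Sum>x\<in>UNIV. p x) = 1"

definition is_policy :: "('s::finite \<Rightarrow> 'a::finite \<Rightarrow> real) \<Rightarrow> bool" where
  "is_policy pol \<longleftrightarrow> (\<forall>s. is_dist (pol s))"

definition mdp_assms ::
  "('s::finite \<Rightarrow> 'a::finite \<Rightarrow> 's \<Rightarrow> real) \<Rightarrow> ('s \<Rightarrow> real) \<Rightarrow> real \<Rightarrow> bool" where
  "mdp_assms P rho0 gamma \<longleftrightarrow>
     (\<forall>s a. is_dist (P s a)) \<and> is_dist rho0 \<and> (\<forall>s. 0 < rho0 s) \<and> 0 < gamma \<and> gamma < 1"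

definition Ppi :: "('s::finite \<Rightarrow> 'a::finite \<Rightarrow> 's \<Rightarrow> real) \<Rightarrow> ('s \<Rightarrow> 'a \<Rightarrow> real) \<Rightarrow> 's \<Rightarrow> 's \<Rightarrow> real" where
  "Ppi P pol s s' = (\<Sum>a\<in>UNIV. pol s a * P s a s')"

fun Pstep :: "('s::finite \<Rightarrow> 'a::finite \<Rightarrow> 's \<Rightarrow> real) \<Rightarrow> ('s \<Rightarrow> 'a \<Rightarrow> real) \<Rightarrow> nat \<Rightarrow> 's \<Rightarrow> 's \<Rightarrow> real" where
  "Pstep P pol 0 s s' = (if s = s' then 1 else 0)"
| "Pstep P pol (Suc t) s s' = (\<Sum>s''\<in>UNIV. Pstep P pol t s s'' * Ppi P pol s'' s')"

definition state_prob :: "('s::finite \<Rightarrow> 'a::finite \<Rightarrow> 's \<Rightarrow> real) \<Rightarrow> ('s \<Rightarrow> real) \<Rightarrow> ('s \<Rightarrow> 'a \<Rightarrow> real) \<Rightarrow> nat \<Rightarrow> 's \<Rightarrow> real" where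
  "state_prob P rho0 pol t s = (\<Sum>s0\<in>UNIV. rho0 s0 * Pstep P pol t s0 s)"

definition rpi :: "('s::finite \<Rightarrow> 'a::finite \<Rightarrow> real) \<Rightarrow> ('s \<Rightarrow> 'a \<Rightarrow> real) \<Rightarrow> 's \<Rightarrow> real" where
  "rpi r pol s = (\<Sum>a\<in>UNIV. pol s a * r s a)"

definition eta where
  "eta P r rho0 gamma pol = (\<Sum>t. gamma ^ t * (\<Sum>s\<in>UNIV. state_prob P rho0 pol t s * rpi r pol s))"

definition rho where
  "rho P rho0 gamma pol s = (\<Sum>t. gamma ^ t * state_prob P rho0 pol t s)"

definition Vf where
  "Vf P r gamma pol s = (\<Sum>l. gamma ^ l * (\<Sum>s'\<in>UNIV. Pstep P pol l s s' * rpi r pol s'))"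

(* Q_pi(s,a) = E_pi[sum_l gamma^l r(s_l,a_l) | s_0 = s, a_0 = a]:
   the l = 0 term is r(s,a); for l+1, s_1 ~ P(.|s,a) and then l further pol-steps *)
definition Qf where
  "Qf P r gamma pol s a = r s a +
     (\<Sum>l. gamma ^ (Suc l) * (\<Sum>s1\<in>UNIV. P s a s1 * (\<Sum>s'\<in>UNIV. Pstep P pol l s1 s' * rpi r pol s')))"

definition Adv where
  "Adv P r gamma pol s a = Qf P r gamma pol s a - Vf P r gamma pol s"

definition policy_adv where
  "policy_adv P r rho0 gamma pol pol' =
     (\<Sum>s\<in>UNIV. rho P rho0 gamma pol s * (\<Sum>a\<in>UNIV. pol' s a * Adv P r gamma pol s a))"

definition surrogate where
  "surrogate P r rho0 gamma pol pol' = eta P r rho0 gamma pol + policy_adv P r rho0 gamma pol pol'"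

definition opt_adv where
  "opt_adv P r rho0 gamma pol = (SUP pol'\<in>{pol'. is_policy pol'}. policy_adv P r rho0 gamma pol pol')"

definition dtv :: "('x::finite \<Rightarrow> real) \<Rightarrow> ('x \<Rightarrow> real) \<Rightarrow> real" where
  "dtv p q = (1/2) * (\<Sum>x\<in>UNIV. \<bar>p x - q x\<bar>)"

definition tr_div where
  "tr_div P rho0 gamma pol pol' = (\<Sum>s\<in>UNIV. rho P rho0 gamma pol s * dtv (pol s) (pol' s))"

end

theory Submission
  imports Defs
begin


lemma Ppi_nonneg: "\<forall>s a. is_dist (P s a) \<Longrightarrow> is_policy pol \<Longrightarrow> 0 \<le> Ppi P pol s s'"
  unfolding Ppi_def is_policy_def is_dist_def by (auto intro!: sum_nonneg)

lemma Ppi_sum: "\<forall>s a. is_dist (P s a) \<Longrightarrow> is_policy pol \<Longrightarrow> (\<Sum>s'\<in>UNIV. Ppi P pol s s') = 1"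
proof -
  assume a: "\<forall>s a. is_dist (P s a)" "is_policy pol"
  have "(\<Sum>s'\<in>UNIV. Ppi P pol s s') = (\<Sum>s'\<in>UNIV. \<Sum>a\<in>UNIV. pol s a * P s a s')"
    unfolding Ppi_def by simp
  also have "\<dots> = (\<Sum>a\<in>UNIV. \<Sum>s'\<in>UNIV. pol s a * P s a s')" by (rule sum.swap)
  also have "\<dots> = (\<Sum>a\<in>UNIV. pol s a * (\<Sum>s'\<in>UNIV. P s a s'))" by (simp only: sum_distrib_left)
  also have "\<dots> = 1" using a unfolding is_dist_def is_policy_def by simp
  finally show ?thesis .
qed

lemma Pstep_nonneg: "\<forall>s a. is_dist (P s a) \<Longrightarrow> is_policy pol \<Longrightarrow> 0 \<le> Pstep P pol t s s'"
proof (induction t arbitrary: s')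
  case 0 then show ?case by simp
next
  case (Suc t)
  show ?case unfolding Pstep.simps
    by (rule sum_nonneg, rule mult_nonneg_nonneg, rule Suc.IH[OF Suc.prems], rule Ppi_nonneg[OF Suc.prems])
qed

lemma Pstep_sum: "\<forall>s a. is_dist (P s a) \<Longrightarrow> is_policy pol \<Longrightarrow> (\<Sum>s'\<in>UNIV. Pstep P pol t s s') = 1"
proof (induction t)
  case 0 then show ?case by simp
next
  case (Suc t)
  have "(\<Sum>s'\<in>UNIV. Pstep P pol (Suc t) s s') = (\<Sum>s'\<in>UNIV. \<Sum>s''\<in>UNIV. Pstep P pol t s s'' * Ppi P pol s'' s')"
    by simp
  also have "\<dots> = (\<Sum>s''\<in>UNIV. \<Sum>s'\<in>UNIV. Pstep P pol t s s'' * Ppi P pol s'' s')" by (rule sum.swap)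
  also have "\<dots> = (\<Sum>s''\<in>UNIV. Pstep P pol t s s'' * (\<Sum>s'\<in>UNIV. Ppi P pol s'' s'))"
    by (simp only: sum_distrib_left)
  also have "\<dots> = 1" using Suc by (simp add: Ppi_sum)
  finally show ?case .
qed

lemma Pstep_le1: "\<forall>s a. is_dist (P s a) \<Longrightarrow> is_policy pol \<Longrightarrow> Pstep P pol t s s' \<le> 1"
proof -
  assume a: "\<forall>s a. is_dist (P s a)" "is_policy pol"
  have "Pstep P pol t s s' \<le> (\<Sum>x\<in>UNIV. Pstep P pol t s x)"
    by (rule member_le_sum) (auto intro: Pstep_nonneg[OF a])
  then show ?thesis using Pstep_sum[OF a] by simp
qed

lemma Pstep_left: "Pstep P pol (Suc t) s s' = (\<Sum>s1\<in>UNIV. Ppi P pol s s1 * Pstep P pol t s1 s')"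
proof (induction t arbitrary: s')
  case 0
  have "(\<Sum>s''\<in>UNIV. (if s = s'' then 1 else 0) * Ppi P pol s'' s') = (\<Sum>s''\<in>UNIV. if s = s'' then Ppi P pol s'' s' else 0)"
    by (rule sum.cong) auto
  also have "\<dots> = Ppi P pol s s'" by simp
  finally have 1: "(\<Sum>s''\<in>UNIV. (if s = s'' then 1 else 0) * Ppi P pol s'' s') = Ppi P pol s s'" .
  have "(\<Sum>s1\<in>UNIV. Ppi P pol s s1 * (if s1 = s' then 1 else 0)) = (\<Sum>s1\<in>UNIV. if s1 = s' then Ppi P pol s s1 else 0)"
    by (rule sum.cong) auto
  also have "\<dots> = Ppi P pol s s'" by simp
  finally have 2: "(\<Sum>s1\<in>UNIV. Ppi P pol s s1 * (if s1 = s' then 1 else 0)) = Ppi P pol s s'" .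
  show ?case using 1 2 by simp
next
  case (Suc t)
  have "Pstep P pol (Suc (Suc t)) s s' = (\<Sum>s''\<in>UNIV. (\<Sum>s1\<in>UNIV. Ppi P pol s s1 * Pstep P pol t s1 s'') * Ppi P pol s'' s')"
    using Suc by simp
  also have "\<dots> = (\<Sum>s''\<in>UNIV. \<Sum>s1\<in>UNIV. Ppi P pol s s1 * (Pstep P pol t s1 s'' * Ppi P pol s'' s'))"
    by (simp only: sum_distrib_right mult.assoc)
  also have "\<dots> = (\<Sum>s1\<in>UNIV. \<Sum>s''\<in>UNIV. Ppi P pol s s1 * (Pstep P pol t s1 s'' * Ppi P pol s'' s'))"
    by (rule sum.swap)
  also have "\<dots> = (\<Sum>s1\<in>UNIV. Ppi P pol s s1 * (\<Sum>s''\<in>UNIV. Pstep P pol t s1 s'' * Ppi P pol s'' s'))"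
    by (simp only: sum_distrib_left)
  also have "\<dots> = (\<Sum>s1\<in>UNIV. Ppi P pol s s1 * Pstep P pol (Suc t) s1 s')" by simp
  finally show ?case .
qed

lemma geo_summable: fixes gamma :: real
  assumes "0 < gamma" "gamma < 1" "\<And>t. \<bar>x t\<bar> \<le> B"
  shows "summable (\<lambda>t. gamma ^ t * x t)"
proof (rule summable_comparison_test')
  show "summable (\<lambda>t. B * gamma ^ t)" using assms by (intro summable_mult summable_geometric) auto
  fix n
  have "norm (gamma ^ n * x n) = gamma^n * \<bar>x n\<bar>" using assms(1) by (simp add: abs_mult)
  also have "\<dots> \<le> gamma^n * B" by (rule mult_left_mono) (use assms in auto)
  finally show "norm (gamma ^ n * x n) \<le> B * gamma ^ n" by (simp add: mult.commute)
qed



definition fv where "fv P r pol l s = (\<Sum>s'\<in>UNIV. Pstep P pol l s s' * rpi r pol s')"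
definition Bd where "Bd r pol = (\<Sum>s'\<in>UNIV. \<bar>rpi r pol s'\<bar>)"

lemma fv_bound: assumes "\<forall>s a. is_dist (P s a)" "is_policy pol"
  shows "\<bar>fv P r pol l s\<bar> \<le> Bd r pol"
proof -
  have "\<bar>fv P r pol l s\<bar> \<le> (\<Sum>s'\<in>UNIV. \<bar>Pstep P pol l s s' * rpi r pol s'\<bar>)"
    unfolding fv_def by (rule sum_abs)
  also have "\<dots> \<le> (\<Sum>s'\<in>UNIV. \<bar>rpi r pol s'\<bar>)"
  proof (rule sum_mono)
    fix x
    have "\<bar>Pstep P pol l s x * rpi r pol x\<bar> = Pstep P pol l s x * \<bar>rpi r pol x\<bar>"
      using Pstep_nonneg[OF assms] by (simp add: abs_mult)
    also have "\<dots> \<le> 1 * \<bar>rpi r pol x\<bar>"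
      by (rule mult_right_mono) (use Pstep_le1[OF assms] in auto)
    finally show "\<bar>Pstep P pol l s x * rpi r pol x\<bar> \<le> \<bar>rpi r pol x\<bar>" by simp
  qed
  finally show ?thesis unfolding Bd_def .
qed

lemma fv_0: "fv P r pol 0 s = rpi r pol s"
proof -
  have "fv P r pol 0 s = (\<Sum>s'\<in>UNIV. if s = s' then rpi r pol s' else 0)"
    unfolding fv_def by (rule sum.cong) auto
  also have "\<dots> = rpi r pol s" by simp
  finally show ?thesis .
qed

lemma fv_Suc: "fv P r pol (Suc l) s = (\<Sum>s1\<in>UNIV. Ppi P pol s s1 * fv P r pol l s1)"
proof -
  have "fv P r pol (Suc l) s = (\<Sum>s'\<in>UNIV. \<Sum>s1\<in>UNIV. Ppi P pol s s1 * (Pstep P pol l s1 s' * rpi r pol s'))"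
    unfolding fv_def Pstep_left by (simp only: sum_distrib_right mult.assoc)
  also have "\<dots> = (\<Sum>s1\<in>UNIV. \<Sum>s'\<in>UNIV. Ppi P pol s s1 * (Pstep P pol l s1 s' * rpi r pol s'))"
    by (rule sum.swap)
  also have "\<dots> = (\<Sum>s1\<in>UNIV. Ppi P pol s s1 * fv P r pol l s1)"
    unfolding fv_def by (simp only: sum_distrib_left)
  finally show ?thesis .
qed

lemma inner_bound: assumes "\<forall>s a. is_dist (P s a)" "is_policy pol"
  shows "\<bar>\<Sum>s1\<in>UNIV. P s a s1 * fv P r pol l s1\<bar> \<le> Bd r pol"
proof -
  have "\<bar>\<Sum>s1\<in>UNIV. P s a s1 * fv P r pol l s1\<bar> \<le> (\<Sum>s1\<in>UNIV. \<bar>P s a s1 * fv P r pol l s1\<bar>)"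
    by (rule sum_abs)
  also have "\<dots> \<le> (\<Sum>s1\<in>UNIV. P s a s1 * Bd r pol)"
  proof (rule sum_mono)
    fix x
    have "0 \<le> P s a x" using assms(1) unfolding is_dist_def by auto
    then show "\<bar>P s a x * fv P r pol l x\<bar> \<le> P s a x * Bd r pol"
      using fv_bound[OF assms] by (simp add: abs_mult mult_left_mono)
  qed
  also have "\<dots> = Bd r pol" using assms(1) unfolding is_dist_def by (simp add: sum_distrib_right[symmetric])
  finally show ?thesis .
qed

lemma adv_zero:
  fixes gamma :: real
  assumes dP: "\<forall>s a. is_dist (P s a)" and pp: "is_policy pol" and g: "0 < gamma" "gamma < 1"
  shows "(\<Sum>a\<in>UNIV. pol s a * Adv P r gamma pol s a) = 0"
proof -
  let ?f = "fv P r pol"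
  have Bnn: "0 \<le> Bd r pol" unfolding Bd_def by (auto intro: sum_nonneg)
  have V: "Vf P r gamma pol s = (\<Sum>l. gamma ^ l * ?f l s)" unfolding Vf_def fv_def ..
  have sV: "summable (\<lambda>l. gamma ^ l * ?f l s)"
    by (rule geo_summable[OF g]) (rule fv_bound[OF dP pp])
  have V2: "Vf P r gamma pol s = rpi r pol s + (\<Sum>l. gamma ^ Suc l * ?f (Suc l) s)"
    using suminf_split_head[OF sV] V fv_0[of P r pol s] by simp
  define G where "G a l = gamma ^ Suc l * (\<Sum>s1\<in>UNIV. P s a s1 * ?f l s1)" for a l
  have sG: "summable (G a)" for a
  proof -
    have "summable (\<lambda>l. gamma ^ l * (gamma * (\<Sum>s1\<in>UNIV. P s a s1 * ?f l s1)))"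
    proof (rule geo_summable[OF g])
      fix t
      have "\<bar>gamma * (\<Sum>s1\<in>UNIV. P s a s1 * ?f t s1)\<bar> = gamma * \<bar>\<Sum>s1\<in>UNIV. P s a s1 * ?f t s1\<bar>"
        using g by (simp add: abs_mult)
      also have "\<dots> \<le> 1 * Bd r pol"
        using inner_bound[OF dP pp, where s=s and a=a and l=t and r=r] g Bnn by (intro mult_mono) auto
      finally show "\<bar>gamma * (\<Sum>s1\<in>UNIV. P s a s1 * ?f t s1)\<bar> \<le> Bd r pol" by simp
    qed
    moreover have "G a = (\<lambda>l. gamma ^ l * (gamma * (\<Sum>s1\<in>UNIV. P s a s1 * ?f l s1)))"
      by (rule ext) (simp add: G_def)
    ultimately show ?thesis by simp
  qed
  have Q: "Qf P r gamma pol s a = r s a + suminf (G a)" for a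
    unfolding Qf_def G_def fv_def ..
  have "(\<Sum>a\<in>UNIV. pol s a * Qf P r gamma pol s a)
      = rpi r pol s + (\<Sum>a\<in>UNIV. pol s a * suminf (G a))"
    unfolding Q rpi_def by (simp add: distrib_left sum.distrib)
  also have "(\<Sum>a\<in>UNIV. pol s a * suminf (G a)) = (\<Sum>a\<in>UNIV. \<Sum>l. pol s a * G a l)"
    by (simp add: suminf_mult[OF sG])
  also have "\<dots> = (\<Sum>l. \<Sum>a\<in>UNIV. pol s a * G a l)"
    by (rule suminf_sum[symmetric]) (rule summable_mult[OF sG])
  also have "(\<lambda>l. \<Sum>a\<in>UNIV. pol s a * G a l) = (\<lambda>l. gamma ^ Suc l * ?f (Suc l) s)"
  proof
    fix l
    have "(\<Sum>a\<in>UNIV. pol s a * G a l) = gamma ^ Suc l * (\<Sum>a\<in>UNIV. \<Sum>s1\<in>UNIV. pol s a * P s a s1 * ?f l s1)"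
      unfolding G_def by (simp add: sum_distrib_left mult.assoc mult.left_commute)
    also have "(\<Sum>a\<in>UNIV. \<Sum>s1\<in>UNIV. pol s a * P s a s1 * ?f l s1) = (\<Sum>s1\<in>UNIV. \<Sum>a\<in>UNIV. pol s a * P s a s1 * ?f l s1)"
      by (rule sum.swap)
    also have "\<dots> = ?f (Suc l) s"
      unfolding fv_Suc Ppi_def by (simp add: sum_distrib_right)
    finally show "(\<Sum>a\<in>UNIV. pol s a * G a l) = gamma ^ Suc l * ?f (Suc l) s" .
  qed
  finally have PQ: "(\<Sum>a\<in>UNIV. pol s a * Qf P r gamma pol s a) = Vf P r gamma pol s" using V2 by simp
  have ps: "(\<Sum>a\<in>UNIV. pol s a) = 1" using pp unfolding is_policy_def is_dist_def by simp
  have "(\<Sum>a\<in>UNIV. pol s a * Adv P r gamma pol s a)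
      = (\<Sum>a\<in>UNIV. pol s a * Qf P r gamma pol s a) - (\<Sum>a\<in>UNIV. pol s a) * Vf P r gamma pol s"
    unfolding Adv_def by (simp add: right_diff_distrib sum_subtractf sum_distrib_right)
  then show ?thesis using PQ ps by simp
qed



lemma state_prob_nonneg: assumes "\<forall>s a. is_dist (P s a)" "is_policy pol" "is_dist rho0"
  shows "0 \<le> state_prob P rho0 pol t s"
  unfolding state_prob_def using assms(3) Pstep_nonneg[OF assms(1,2)]
  unfolding is_dist_def by (auto intro!: sum_nonneg)

lemma state_prob_sum: assumes "\<forall>s a. is_dist (P s a)" "is_policy pol" "is_dist rho0"
  shows "(\<Sum>s\<in>UNIV. state_prob P rho0 pol t s) = 1"
proof -
  have "(\<Sum>s\<in>UNIV. state_prob P rho0 pol t s) = (\<Sum>s0\<in>UNIV. \<Sum>s\<in>UNIV. rho0 s0 * Pstep P pol t s0 s)"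
    unfolding state_prob_def by (rule sum.swap)
  also have "\<dots> = (\<Sum>s0\<in>UNIV. rho0 s0 * (\<Sum>s\<in>UNIV. Pstep P pol t s0 s))" by (simp only: sum_distrib_left)
  also have "\<dots> = 1" using Pstep_sum[OF assms(1,2)] assms(3) unfolding is_dist_def by simp
  finally show ?thesis .
qed

lemma state_prob_le1: assumes "\<forall>s a. is_dist (P s a)" "is_policy pol" "is_dist rho0"
  shows "state_prob P rho0 pol t s \<le> 1"
proof -
  have "state_prob P rho0 pol t s \<le> (\<Sum>x\<in>UNIV. state_prob P rho0 pol t x)"
    by (rule member_le_sum) (auto intro: state_prob_nonneg[OF assms])
  then show ?thesis using state_prob_sum[OF assms] by simp
qed

lemma sp_summable: assumes "\<forall>s a. is_dist (P s a)" "is_policy pol" "is_dist rho0" "0 < gamma" "gamma < (1::real)"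
  shows "summable (\<lambda>t. gamma ^ t * state_prob P rho0 pol t s)"
  by (rule geo_summable[OF assms(4,5), where B=1])
     (use state_prob_nonneg[OF assms(1-3)] state_prob_le1[OF assms(1-3)] in \<open>simp add: abs_le_iff\<close>)

lemma rho_nonneg: assumes "\<forall>s a. is_dist (P s a)" "is_policy pol" "is_dist rho0" "0 < gamma" "gamma < (1::real)"
  shows "0 \<le> rho P rho0 gamma pol s"
  unfolding rho_def using assms state_prob_nonneg[OF assms(1-3)]
  by (intro suminf_nonneg sp_summable) auto

lemma rho_sum: assumes "\<forall>s a. is_dist (P s a)" "is_policy pol" "is_dist rho0" "0 < gamma" "gamma < (1::real)"
  shows "(\<Sum>s\<in>UNIV. rho P rho0 gamma pol s) = 1 / (1 - gamma)"
proof -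
  have "(\<Sum>s\<in>UNIV. rho P rho0 gamma pol s) = (\<Sum>t. \<Sum>s\<in>UNIV. gamma ^ t * state_prob P rho0 pol t s)"
    unfolding rho_def by (rule suminf_sum[symmetric]) (rule sp_summable[OF assms])
  also have "\<dots> = (\<Sum>t. gamma ^ t)"
    by (simp add: sum_distrib_left[symmetric] state_prob_sum[OF assms(1-3)])
  also have "\<dots> = 1 / (1 - gamma)" using assms by (simp add: suminf_geometric)
  finally show ?thesis .
qed

lemma dtv_le1: assumes "is_dist p" "is_dist q" shows "dtv p q \<le> 1"
proof -
  have "(\<Sum>x\<in>UNIV. \<bar>p x - q x\<bar>) \<le> (\<Sum>x\<in>UNIV. p x + q x)"
    by (rule sum_mono) (use assms in \<open>auto simp: is_dist_def abs_le_iff\<close>)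
  also have "\<dots> = 2" using assms by (simp add: is_dist_def sum.distrib)
  finally show ?thesis unfolding dtv_def by simp
qed

lemma greedy_ex: "\<exists>a. \<forall>b. (f::'a::finite \<Rightarrow> real) b \<le> f a"
proof -
  have "Max (range f) \<in> range f" by (rule Max_in) auto
  then obtain a where "f a = Max (range f)" by (metis imageE)
  moreover have "f b \<le> Max (range f)" for b by (rule Max_ge) auto
  ultimately show ?thesis by metis
qed



theorem mainTheorem2:
  fixes P :: "'s::finite \<Rightarrow> 'a::finite \<Rightarrow> 's \<Rightarrow> real"
    and r :: "'s \<Rightarrow> 'a \<Rightarrow> real"
    and rho0 :: "'s \<Rightarrow> real"
    and gamma delta :: real
    and pol pit :: "'s \<Rightarrow> 'a \<Rightarrow> real"
  assumes "mdp_assms P rho0 gamma"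
    and "is_policy pol"
    and "delta > 0"
    and "is_policy pit"
    and "tr_div P rho0 gamma pol pit \<le> delta"
    and "\<forall>pol'. is_policy pol' \<and> tr_div P rho0 gamma pol pol' \<le> delta \<longrightarrow>
           surrogate P r rho0 gamma pol pol' \<le> surrogate P r rho0 gamma pol pit"
  shows "surrogate P r rho0 gamma pol pit - surrogate P r rho0 gamma pol pol
           \<ge> min 1 ((1 - gamma) * delta) * opt_adv P r rho0 gamma pol"
proof -
  have dP: "\<forall>s a. is_dist (P s a)" and d0: "is_dist rho0" and g: "0 < gamma" "gamma < 1"
    using assms(1) unfolding mdp_assms_def by auto
  note pp = assms(2)
  let ?A = "Adv P r gamma pol"
  let ?rho = "rho P rho0 gamma pol"
  let ?adv = "policy_adv P r rho0 gamma pol"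
  define gr where "gr s = (SOME a. \<forall>b. ?A s b \<le> ?A s a)" for s
  have grmax: "?A s b \<le> ?A s (gr s)" for s b
    unfolding gr_def using someI_ex[OF greedy_ex[of "?A s"]] by blast
  define ps where "ps s a = (if a = gr s then 1 else 0::real)" for s a
  have psd: "is_dist (ps s)" for s
    unfolding is_dist_def ps_def by simp
  have psp: "is_policy ps" unfolding is_policy_def using psd by simp
  have ps_inner: "(\<Sum>a\<in>UNIV. ps s a * ?A s a) = ?A s (gr s)" for s
  proof -
    have "(\<Sum>a\<in>UNIV. ps s a * ?A s a) = (\<Sum>a\<in>UNIV. if a = gr s then ?A s a else 0)"
      unfolding ps_def by (rule sum.cong) auto
    then show ?thesis by simp
  qed
  have advle: "?adv q \<le> ?adv ps" if "is_policy q" for q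
    unfolding policy_adv_def
  proof (rule sum_mono, rule mult_left_mono)
    fix s
    show "0 \<le> ?rho s" using rho_nonneg[OF dP pp d0 g] .
    have "(\<Sum>a\<in>UNIV. q s a * ?A s a) \<le> (\<Sum>a\<in>UNIV. q s a * ?A s (gr s))"
      by (rule sum_mono, rule mult_left_mono) (use that grmax in \<open>auto simp: is_policy_def is_dist_def\<close>)
    also have "\<dots> = ?A s (gr s)" using that by (simp add: is_policy_def is_dist_def sum_distrib_right[symmetric])
    finally show "(\<Sum>a\<in>UNIV. q s a * ?A s a) \<le> (\<Sum>a\<in>UNIV. ps s a * ?A s a)" using ps_inner by simp
  qed
  have opt: "opt_adv P r rho0 gamma pol = ?adv ps"
    unfolding opt_adv_def
    by (rule cSup_eq_maximum) (use psp advle in auto)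
  define al where "al = min 1 ((1 - gamma) * delta)"
  have al0: "0 \<le> al" "al \<le> 1" "al \<le> (1 - gamma) * delta"
    using g assms(3) unfolding al_def by auto
  define pn where "pn s a = (1 - al) * pol s a + al * ps s a" for s a
  have pnp: "is_policy pn"
    unfolding is_policy_def is_dist_def
  proof (intro allI conjI)
    fix s a show "0 \<le> pn s a" unfolding pn_def using al0 pp psd
      by (auto simp: is_policy_def is_dist_def intro!: add_nonneg_nonneg mult_nonneg_nonneg)
  next
    fix s show "(\<Sum>a\<in>UNIV. pn s a) = 1" unfolding pn_def using pp psd
      by (simp add: sum.distrib sum_distrib_left[symmetric] is_policy_def is_dist_def)
  qed
  have adv0: "?adv pol = 0"
    unfolding policy_adv_def by (simp add: adv_zero[OF dP pp g])
  have advpn: "?adv pn = al * ?adv ps"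
  proof -
    have "?adv pn = (1 - al) * ?adv pol + al * ?adv ps"
    proof -
      have inner: "?rho s * (\<Sum>a\<in>UNIV. pn s a * ?A s a) =
          (1 - al) * (?rho s * (\<Sum>a\<in>UNIV. pol s a * ?A s a)) + al * (?rho s * (\<Sum>a\<in>UNIV. ps s a * ?A s a))" for s
      proof -
        have "(\<Sum>a\<in>UNIV. pn s a * ?A s a) = (\<Sum>a\<in>UNIV. (1 - al) * (pol s a * ?A s a) + al * (ps s a * ?A s a))"
          unfolding pn_def by (rule sum.cong) (auto simp: algebra_simps)
        also have "\<dots> = (1 - al) * (\<Sum>a\<in>UNIV. pol s a * ?A s a) + al * (\<Sum>a\<in>UNIV. ps s a * ?A s a)"
          by (simp add: sum.distrib sum_distrib_left)
        finally have e: "(\<Sum>a\<in>UNIV. pn s a * ?A s a) = (1 - al) * (\<Sum>a\<in>UNIV. pol s a * ?A s a) + al * (\<Sum>a\<in>UNIV. ps s a * ?A s a)" .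
        show ?thesis unfolding e by (simp add: algebra_simps)
      qed
      show ?thesis unfolding policy_adv_def inner
        by (simp add: sum.distrib sum_distrib_left)
    qed
    then show ?thesis using adv0 by simp
  qed
  have dtvpn: "dtv (pol s) (pn s) = al * dtv (pol s) (ps s)" for s
  proof -
    have "\<bar>pol s a - pn s a\<bar> = al * \<bar>pol s a - ps s a\<bar>" for a
    proof -
      have "pol s a - pn s a = al * (pol s a - ps s a)" unfolding pn_def by (simp add: algebra_simps)
      then show ?thesis using al0 by (simp add: abs_mult)
    qed
    then show ?thesis unfolding dtv_def by (simp add: sum_distrib_left)
  qed
  have "tr_div P rho0 gamma pol pn = al * (\<Sum>s\<in>UNIV. ?rho s * dtv (pol s) (ps s))"
    unfolding tr_div_def dtvpn by (simp add: sum_distrib_left algebra_simps)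
  also have "\<dots> \<le> al * (\<Sum>s\<in>UNIV. ?rho s * 1)"
    by (rule mult_left_mono, rule sum_mono, rule mult_left_mono)
       (use al0 rho_nonneg[OF dP pp d0 g] dtv_le1 pp psd in \<open>auto simp: is_policy_def intro: dtv_le1\<close>)
  also have "\<dots> = al / (1 - gamma)" using rho_sum[OF dP pp d0 g] by simp
  also have "\<dots> \<le> delta" using al0 g by (simp add: divide_le_eq mult.commute)
  finally have "tr_div P rho0 gamma pol pn \<le> delta" .
  then have "surrogate P r rho0 gamma pol pn \<le> surrogate P r rho0 gamma pol pit"
    using assms(6) pnp by blast
  then have "?adv pn \<le> ?adv pit" unfolding surrogate_def by simp
  then show ?thesis
    unfolding surrogate_def opt using adv0 advpn al_def by simp
qed


end
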